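(* Consider a $2\times N$ switch with traffic pattern consisting of one broadcast flow from input 1 to all $N$ outputs with rate $r_0$ and, for each $i\in[N]$, a unicast from input 2 to output $i$ with rate $r_i$. With fanout splitting but no coding, a speedup of at least $1.5-\frac1N$ is needed to sustain all admissible traffic; i.e. if $s$ is such that $\frac1s\mathbf r\in\mathbf R_{fs}$ for every admissible $\mathbf r$, then $s\ge 1.5-\frac1N$.
   Context: Admissible: $r_i\ge0$ for all $i$, $r_0\le 1$, $\sum_{i=1}^N r_i\le1$, and $r_0+r_i\le1$ for $i\in[N]$. $\mathbf R_{fs}$ is the rate region with fanout splitting but no coding: the set of rational rate vectors for which there is a frame-based schedule (a fixed sequence of $F$ slot-configurations repeated every frame, with each $r_iF$ integer) in which each slot every input idles or sends one original uncoded packet of one of its flows to a subset of that flow's fanout, each output receives from at most one input, and for every flow and frame $n\ge1$ the oldest $rF$ packets ($r$ the flow's rate) queued at the end of frame $n-1$ are delivered to all outputs of the fanout by the end of frame $n$ (all of them if fewer). A switch with speedup $s$ can go through $s$ configurations per slot, so an admissible $\mathbf r$ is sustainable with speedup $s$ iff $\frac1s\mathbf r\in\mathbf R_{fs}$. *)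

theory Defs
  imports Complex_Main
begin

text \<open>The 2 x N switch: input 1 carries one broadcast flow (flow 0) with fanout
  the outputs {1..N}; input 2 carries, for each i in {1..N}, a unicast flow (flow i)
  with fanout {i}.

  A slot configuration is a pair (a1, a2):
   a1 :: (nat * nat set) option -- input 1 idles (None) or sends the broadcast packet
         with (frame-relative) label k to the set S of outputs (Some (k, S));
   a2 :: nat option             -- input 2 idles (None) or sends a packet of
         unicast flow i to output i (Some i).
  In a frame, the broadcast packets to be delivered are labelled 0, ..., r0*F - 1
  (oldest first); fanout splitting means a packet may be sent to different subsets
  of outputs in different slots.\<close>

definition admissible :: "nat \<Rightarrow> (nat \<Rightarrow> real) \<Rightarrow> bool" where
  "admissible N r \<longleftrightarrow>
     (\<forall>i\<in>{0..N}. r i \<ge> 0) \<and> r 0 \<le> 1 \<and> (\<Sum>i=1..N. r i) \<le> 1 \<and>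
     (\<forall>i\<in>{1..N}. r 0 + r i \<le> 1)"

definition fs_frame_schedule ::
  "nat \<Rightarrow> (nat \<Rightarrow> real) \<Rightarrow> nat \<Rightarrow> (nat \<Rightarrow> (nat \<times> nat set) option) \<Rightarrow> (nat \<Rightarrow> nat option) \<Rightarrow> bool" where
  "fs_frame_schedule N r F c1 c2 \<longleftrightarrow>
     F > 0 \<and>
     (\<forall>i\<in>{0..N}. r i * real F \<in> \<int>) \<and>
     \<comment> \<open>input 1 sends a broadcast packet only to outputs in its fanout\<close>
     (\<forall>t<F. \<forall>k S. c1 t = Some (k, S) \<longrightarrow> S \<subseteq> {1..N}) \<and>
     \<comment> \<open>input 2 sends a unicast packet of flow i only to output i\<close>
     (\<forall>t<F. \<forall>i. c2 t = Some i \<longrightarrow> i \<in> {1..N}) \<and>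
     \<comment> \<open>each output receives from at most one input in each slot\<close>
     (\<forall>t<F. \<forall>i k S. c2 t = Some i \<longrightarrow> c1 t = Some (k, S) \<longrightarrow> i \<notin> S) \<and>
     \<comment> \<open>each of the r0*F broadcast packets of the frame reaches every output\<close>
     (\<forall>k. real k < r 0 * real F \<longrightarrow>
        (\<forall>j\<in>{1..N}. \<exists>t<F. \<exists>S. c1 t = Some (k, S) \<and> j \<in> S)) \<and>
     \<comment> \<open>each unicast flow i gets r_i*F packets delivered per frame\<close>
     (\<forall>i\<in>{1..N}. r i * real F \<le> real (card {t. t < F \<and> c2 t = Some i}))"

definition R_fs :: "nat \<Rightarrow> (nat \<Rightarrow> real) set" where
  "R_fs N = {r. (\<forall>i\<in>{0..N}. r i \<in> \<rat>) \<and>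
               (\<exists>F c1 c2. fs_frame_schedule N r F c1 c2)}"

end

theory Submission
  imports Defs
begin

lemma ceil_count: "(x::real) \<ge> 0 \<Longrightarrow> {k::nat. real k < x} = {..<nat \<lceil>x\<rceil>}"
  by (auto, linarith+)

theorem corollary5:
  fixes N :: nat and s :: real
  assumes "N \<ge> 1" and "s > 0"
    and "\<forall>r. (\<forall>i\<in>{0..N}. r i \<in> \<rat>) \<and> admissible N r \<longrightarrow>
               (\<lambda>i. r i / s) \<in> R_fs N"
  shows "s \<ge> 3 / 2 - 1 / real N"
proof -
  define r :: "nat \<Rightarrow> real" where "r = (\<lambda>i. if i = 0 then 1 - 1 / real N else 1 / real N)"
  have Npos: "real N \<ge> 1" using assms(1) by simp
  have rq: "\<forall>i\<in>{0..N}. r i \<in> \<rat>" unfolding r_def by auto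
  have sum1: "(\<Sum>i=1..N. r i) = 1" unfolding r_def using Npos by simp
  have adm: "admissible N r" unfolding admissible_def using sum1 Npos
    by (auto simp: r_def field_simps)
  from assms(3) rq adm have "(\<lambda>i. r i / s) \<in> R_fs N" by blast
  then obtain F c1 c2 where sch: "fs_frame_schedule N (\<lambda>i. r i / s) F c1 c2"
    unfolding R_fs_def by blast
  note S = sch[unfolded fs_frame_schedule_def]
  have Fpos: "F > 0" using S by blast
  define x where "x = r 0 / s * real F"
  have x0: "x \<ge> 0" unfolding x_def r_def using Npos assms(2) by simp
  define K where "K = {k::nat. real k < x}"
  have Keq: "K = {..<nat \<lceil>x\<rceil>}" unfolding K_def using ceil_count[OF x0] .
  have cardK: "real (card K) \<ge> x" unfolding Keq using x0 by simp
  define lab where "lab t = fst (the (c1 t))" for t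
  define P where "P = {t. t < F \<and> c1 t \<noteq> None \<and> c2 t = None}"
  define Bo where "Bo = {t. t < F \<and> c1 t \<noteq> None \<and> c2 t \<noteq> None}"
  define OU where "OU = {t. t < F \<and> c1 t = None \<and> c2 t \<noteq> None}"
  define G where "G = {k\<in>K. \<exists>t\<in>P. lab t = k}"
  define Bd where "Bd = K - G"
  have finK: "finite K" unfolding Keq by simp
  have finP: "finite P" "finite Bo" "finite OU" unfolding P_def Bo_def OU_def by auto
  have "G \<subseteq> lab ` P" unfolding G_def by auto
  hence cG: "card G \<le> card P" using finP(1) by (meson card_image_le card_mono finite_imageI order_trans)
  have two: "card {t\<in>Bo. lab t = k} \<ge> 2" if k: "k \<in> Bd" for k
  proof -
    have kK: "real k < r 0 / s * real F" using k unfolding Bd_def K_def x_def by auto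
    have cov: "\<forall>j\<in>{1..N}. \<exists>t<F. \<exists>S. c1 t = Some (k, S) \<and> j \<in> S"
      using S kK by blast
    obtain t1 S1 where t1: "t1 < F" "c1 t1 = Some (k, S1)" "1 \<in> S1"
      using cov assms(1) by fastforce
    have "c2 t1 \<noteq> None"
    proof
      assume "c2 t1 = None"
      hence "t1 \<in> P" "lab t1 = k" using t1 by (auto simp: P_def lab_def)
      thus False using k unfolding Bd_def G_def by auto
    qed
    then obtain i1 where i1: "c2 t1 = Some i1" by auto
    have i1N: "i1 \<in> {1..N}" using S t1(1) i1 by blast
    have i1S: "i1 \<notin> S1" using S t1 i1 by blast
    obtain t2 S2 where t2: "t2 < F" "c1 t2 = Some (k, S2)" "i1 \<in> S2"
      using cov i1N by blast
    have ne: "t1 \<noteq> t2" using t1 t2 i1S by auto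
    have "c2 t2 \<noteq> None"
    proof
      assume "c2 t2 = None"
      hence "t2 \<in> P" "lab t2 = k" using t2 by (auto simp: P_def lab_def)
      thus False using k unfolding Bd_def G_def by auto
    qed
    hence "{t1, t2} \<subseteq> {t\<in>Bo. lab t = k}" using t1 t2 i1
      by (auto simp: Bo_def lab_def)
    hence "card {t1, t2} \<le> card {t\<in>Bo. lab t = k}"
      by (rule card_mono[rotated]) (use finP in auto)
    thus ?thesis using ne by simp
  qed
  have finBd: "finite Bd" unfolding Bd_def using finK by simp
  have "(\<Union>k\<in>Bd. {t\<in>Bo. lab t = k}) \<subseteq> Bo" by auto
  hence "card (\<Union>k\<in>Bd. {t\<in>Bo. lab t = k}) \<le> card Bo" using finP by (simp add: card_mono)
  moreover have "card (\<Union>k\<in>Bd. {t\<in>Bo. lab t = k}) = (\<Sum>k\<in>Bd. card {t\<in>Bo. lab t = k})"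
    by (rule card_UN_disjoint) (use finBd finP in auto)
  moreover have "(\<Sum>k\<in>Bd. card {t\<in>Bo. lab t = k}) \<ge> (\<Sum>k\<in>Bd. 2)"
    by (rule sum_mono) (use two in auto)
  ultimately have cBd: "2 * card Bd \<le> card Bo" by simp
  have cK: "card K = card G + card Bd"
  proof -
    have GK: "G \<subseteq> K" unfolding G_def by auto
    hence "card G \<le> card K" using finK by (rule card_mono[rotated])
    thus ?thesis unfolding Bd_def using card_Diff_subset[OF finite_subset[OF GK finK] GK] by simp
  qed
  define Ui where "Ui i = {t. t < F \<and> c2 t = Some i}" for i
  have "(\<Union>i\<in>{1..N}. Ui i) \<subseteq> Bo \<union> OU" unfolding Ui_def Bo_def OU_def by auto
  hence "card (\<Union>i\<in>{1..N}. Ui i) \<le> card (Bo \<union> OU)" using finP by (simp add: card_mono)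
  also have "card (Bo \<union> OU) = card Bo + card OU"
    by (rule card_Un_disjoint) (use finP in \<open>auto simp: Bo_def OU_def\<close>)
  finally have u1: "card (\<Union>i\<in>{1..N}. Ui i) \<le> card Bo + card OU" .
  have u2: "card (\<Union>i\<in>{1..N}. Ui i) = (\<Sum>i=1..N. card (Ui i))"
    by (rule card_UN_disjoint) (auto simp: Ui_def)
  have "(\<Sum>i=1..N. r i / s * real F) \<le> (\<Sum>i=1..N. real (card (Ui i)))"
    by (rule sum_mono) (use S in \<open>auto simp: Ui_def\<close>)
  moreover have "(\<Sum>i=1..N. r i / s * real F) = (\<Sum>i=1..N. r i) * (real F / s)"
    by (simp add: sum_distrib_right sum_divide_distrib)
  moreover have "(\<Sum>i=1..N. real (card (Ui i))) = real (card (\<Union>i\<in>{1..N}. Ui i))"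
    using u2 by simp
  ultimately have "real F / s \<le> real (card (\<Union>i\<in>{1..N}. Ui i))" using sum1 by simp
  hence "real F / s \<le> real (card Bo + card OU)" using u1 by linarith
  note uni = this
  have "P \<union> Bo \<union> OU \<subseteq> {..<F}" unfolding P_def Bo_def OU_def by auto
  hence "card (P \<union> Bo \<union> OU) \<le> F" by (metis card_lessThan card_mono finite_lessThan)
  moreover have "card (P \<union> Bo \<union> OU) = card P + card Bo + card OU"
  proof -
    have "card (P \<union> Bo) = card P + card Bo"
      by (rule card_Un_disjoint) (use finP in \<open>auto simp: P_def Bo_def\<close>)
    moreover have "card ((P \<union> Bo) \<union> OU) = card (P \<union> Bo) + card OU"
      by (rule card_Un_disjoint) (use finP in \<open>auto simp: P_def Bo_def OU_def\<close>)
    ultimately show ?thesis by simp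
  qed
  ultimately have tot: "card P + card Bo + card OU \<le> F" by simp
  have "real (card K) + real F / s / 2 \<le> real F"
  proof -
    have a: "real (card P) + real (card Bo) + real (card OU) \<le> real F" using tot by linarith
    have b: "real (card G) \<le> real (card P)" using cG by simp
    have c: "2 * real (card Bd) \<le> real (card Bo)" using cBd by linarith
    have d: "real (card K) = real (card G) + real (card Bd)" using cK by simp
    have e: "real F / s \<le> real (card Bo) + real (card OU)" using uni by simp
    obtain y where y: "y = real F / s" by simp
    have "real (card K) + y / 2 \<le> real F" using a b c d e y by linarith
    thus ?thesis using y by simp
  qed
  hence main: "(1 - 1 / real N) / s * real F + real F / s / 2 \<le> real F"
    using cardK unfolding x_def r_def by simp
  have "(1 - 1 / real N) / s + 1 / s / 2 \<le> 1"
  proof -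
    have "((1 - 1 / real N) / s + 1 / s / 2) * real F \<le> 1 * real F"
      using main by (simp add: algebra_simps)
    thus ?thesis using Fpos by simp
  qed
  hence "(1 - 1 / real N) + 1 / 2 \<le> s" using assms(2) by (simp add: field_simps)
  thus ?thesis by simp
qed

end
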